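(* Let $A\in\mathbb{R}^{n\times n}$, $B\in\mathbb{R}^{n\times m}$, $C\in\mathbb{R}^{p\times n}$ and let $\mathscr{G}$ be a weighted directed graph on $N$ nodes with Laplacian $\mathcal{L}$, and consider the dynamic network $(A,B,C,\mathscr{G})$ described in the context. Let $L_{G}>0$, $L_{K}>0$ and $\varrho\in(0,1)$. Suppose there are positive constants $W$ and $W_u$, independent of $\gamma,\alpha,\alpha_u,L,L_u,G$ and $K$, such that for any given positive constants $C_{x}$, $C_{\hat{x}}$, $C_{\hat{u}}$ there exist a communication protocol $H(\gamma,\alpha,\alpha_{u},L,L_{u},G)\in\mathscr{H}(\varrho,L_{G})$ and a control protocol $U(K)\in\mathscr{U}(L_{K})$ such that for any initial conditions with $\|X(0)\|_\infty<C_{x}$, $\|\hat{X}(0)\|_\infty<C_{\hat{x}}$ and $\|\hat{U}(0)\|_\infty<C_{\hat{u}}$, the closed-loop network achieves inter-agent state observation and cooperative stabilization under $H$ and $U$, and $\sup_{t\ge 0}\max_{1\le j\le N}\|\Delta_{j}(t)\|_{\infty}\le W$ and $\sup_{t\ge 0}\max_{1\le j\le N}\|\Delta_{u,j}(t)\|_{\infty}\le W_{u}$. Then: (A1) there exists $K\in\mathbb{R}^{m\times n}$ such that all eigenvalues of $A-\lambda_{i}(\mathcal{L})BK$, $i=2,\dots,N$, lie in the open unit disk of the complex plane; and (A2) $(A,C)$ is detectable.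
   Context: Agents $i=1,\dots,N$ have dynamics $x_i(t+1)=Ax_i(t)+Bu_i(t)$, $y_i(t)=Cx_i(t)$, $t=0,1,\dots$. The communication graph $\mathscr{G}$ has node set $\{1,\dots,N\}$ and weighted adjacency matrix $\mathscr{A}=[a_{ij}]$ with $a_{ii}=0$, $a_{ij}\ge0$, and $a_{ij}>0$ iff there is a channel from $j$ to $i$; $N_i=\{j: a_{ij}>0\}$. The Laplacian is $\mathcal{L}=\mathrm{diag}(\sum_j a_{1j},\dots,\sum_j a_{Nj})-\mathscr{A}$; its eigenvalues (with multiplicity), in ascending order of real parts, are $\lambda_1(\mathcal{L})=0,\lambda_2(\mathcal{L}),\dots,\lambda_N(\mathcal{L})$. Norms: for a vector, $\|\cdot\|_\infty$ is the max norm; for a matrix, $\|\cdot\|$ is the spectral (Euclidean operator) norm. Quantizer: for $p\in(0,1]$ and a positive integer $M$, $Q_{p,M}(y)=ip$ if $ip-p/2\le y<ip+p/2$, $i=0,1,\dots,M-1$; $Q_{p,M}(y)=Mp$ if $y\ge Mp-p/2$; $Q_{p,M}(y)=-Q_{p,M}(-y)$ if $y<-p/2$; applied componentwise to vectors. Communication protocol set: for $\varrho\in(0,1]$ and $L_G\in\mathbb{R}^+\cup\{+\infty\}$, $\mathscr{H}(\varrho,L_G)$ consists of protocols $H(\gamma,\alpha,\alpha_u,L,L_u,G)$ with $\gamma\in(0,\varrho)$, $\alpha,\alpha_u\in(0,1]$, positive integers $L,L_u$, and $G\in\mathbb{R}^{n\times p}$ with $\|G\|<L_G$. Under such a protocol,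 each agent $j$ runs the encoder: $\hat x_j(0)=\hat x_{j0}$, $\hat u_j(0)=\hat u_{j0}$, and for $t\ge1$: $s_j(t)=Q_{\alpha,L}\big((y_j(t-1)-C\hat x_j(t-1))/\gamma^{t-1}\big)$, $\hat x_j(t)=A\hat x_j(t-1)+\gamma^{t-1}Gs_j(t)+B\hat u_j(t-1)$, $s_{u,j}(t)=Q_{\alpha_u,L_u}\big((u_j(t)-\hat u_j(t-1))/\gamma^{t-1}\big)$, $\hat u_j(t)=\hat u_j(t-1)+\gamma^{t-1}s_{u,j}(t)$; the symbols $s_j(t),s_{u,j}(t)$ are sent over each channel $(j,i)$, and receiver $i$ runs the decoder $\hat x_{ji}(0)=\hat x_{j0}$, $\hat u_{ji}(0)=\hat u_{j0}$, $\hat x_{ji}(t)=A\hat x_{ji}(t-1)+\gamma^{t-1}Gs_j(t)+B\hat u_{ji}(t-1)$, $\hat u_{ji}(t)=\hat u_{ji}(t-1)+\gamma^{t-1}s_{u,j}(t)$ (so $\hat x_{ji}(t)=\hat x_j(t)$). Control protocol set: for $L_K\in\mathbb{R}^+\cup\{+\infty\}$, $\mathscr{U}(L_K)$ consists of protocols $U(K)$, $K\in\mathbb{R}^{m\times n}$ with $\|K\|<L_K$, given by $u_i(t)=K\sum_{j\in N_i}a_{ij}(\hat x_{ji}(t)-\hat x_i(t))$, $t\ge0$. Quantization errors: for $t\ge0$, $\Delta_j(t)=(y_j(t)-C\hat x_j(t))/\gamma^{t}-s_j(t+1)$ and $\Delta_{u,j}(t)=(u_j(t+1)-\hat u_j(t))/\gamma^{t}-s_{u,j}(t+1)$.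 Stacked vectors: $X(t)=(x_1^T(t),\dots,x_N^T(t))^T$, $\hat X(t)=(\hat x_1^T(t),\dots,\hat x_N^T(t))^T$, $\hat U(t)=(\hat u_1^T(t),\dots,\hat u_N^T(t))^T$. Inter-agent state observation means $\lim_{t\to\infty}(x_j(t)-\hat x_j(t))=0$ for all $j=1,\dots,N$. Cooperative stabilization means $\lim_{t\to\infty}(x_i(t)-x_j(t))=0$ for all $i,j=1,\dots,N$. *)

theory Defs
  imports "HOL-Analysis.Analysis" "HOL-Computational_Algebra.Polynomial"
begin

section \<open>Linear-algebra notions\<close>

text \<open>Complexification of a real matrix.\<close>
definition cmat :: "real^'c^'r \<Rightarrow> complex^'c^'r" where
  "cmat M = (\<chi> i j. complex_of_real (M$i$j))"

text \<open>Characteristic polynomial det(zI - M); its roots (with multiplicity = order)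
  are the eigenvalues (with algebraic multiplicity).\<close>
definition charpoly :: "complex^'n^'n \<Rightarrow> complex poly" where
  "charpoly M = det (\<chi> i j. (if i = j then [:0, 1:] else 0) - [:M$i$j:])"

text \<open>All eigenvalues lie in the open unit disk.\<close>
definition schur_stable :: "complex^'n^'n \<Rightarrow> bool" where
  "schur_stable M \<longleftrightarrow> (\<forall>z. poly (charpoly M) z = 0 \<longrightarrow> cmod z < 1)"

text \<open>(A,C) detectable: there is an output injection L with A - L C Schur stable.\<close>
definition detectable :: "real^'n^'n \<Rightarrow> real^'n^'p \<Rightarrow> bool" where
  "detectable A C \<longleftrightarrow> (\<exists>Lo :: real^'p^'n. schur_stable (cmat (A - Lo ** C)))"

text \<open>Graph Laplacian of a weighted adjacency matrix.\<close>
definition laplacian :: "real^'N^'N \<Rightarrow> real^'N^'N" where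
  "laplacian a = (\<chi> i j. (if i = j then (\<Sum>k\<in>UNIV. a$i$k) else 0) - a$i$j)"

text \<open>The set {lambda_2(L),...,lambda_N(L)}: the eigenvalues of L (with multiplicity)
  after removing one copy of lambda_1(L) = 0.\<close>
definition lap_eigs_rest :: "real^'N^'N \<Rightarrow> complex set" where
  "lap_eigs_rest a = {z. order z (charpoly (cmat (laplacian a))) \<ge> (if z = 0 then 2 else 1)}"

text \<open>Max norm over stacked agent vectors.\<close>
definition stack_infnorm :: "('N::finite \<Rightarrow> real^'k) \<Rightarrow> real" where
  "stack_infnorm X = Max (range (\<lambda>j. infnorm (X j)))"

section \<open>Quantizer\<close>

text \<open>Q_{p,M} on y >= -p/2: i*p if i*p - p/2 <= y < i*p + p/2 (i = 0..M-1),
  M*p if y >= M*p - p/2.\<close>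
definition quant_pos :: "real \<Rightarrow> nat \<Rightarrow> real \<Rightarrow> real" where
  "quant_pos p M y = (if y \<ge> real M * p - p/2 then real M * p
                      else p * of_int \<lfloor>y / p + 1/2\<rfloor>)"

definition quant :: "real \<Rightarrow> nat \<Rightarrow> real \<Rightarrow> real" where
  "quant p M y = (if y < - p/2 then - quant_pos p M (- y) else quant_pos p M y)"

definition quantv :: "real \<Rightarrow> nat \<Rightarrow> real^'k \<Rightarrow> real^'k" where
  "quantv p M v = (\<chi> i. quant p M (v$i))"

section \<open>Closed-loop network\<close>

text \<open>Control protocol U(K): u_i = K sum_{j in N_i} a_ij (xhat_ji - xhat_i), with xhat_ji = xhat_j.\<close>
definition ctrl :: "real^'n^'m \<Rightarrow> real^'N^'N \<Rightarrow> ('N::finite \<Rightarrow> real^'n) \<Rightarrow> 'N \<Rightarrow> real^'m" where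
  "ctrl K a xh i = K *v (\<Sum>j\<in>{j. a$i$j > 0}. a$i$j *\<^sub>R (xh j - xh i))"

text \<open>State (x(t), xhat(t), uhat(t)) of all agents at time t.\<close>
primrec cl ::
  "real^'n^'n \<Rightarrow> real^'m^'n \<Rightarrow> real^'n^'p \<Rightarrow> real^'N^'N \<Rightarrow>
   real \<Rightarrow> real \<Rightarrow> real \<Rightarrow> nat \<Rightarrow> nat \<Rightarrow> real^'p^'n \<Rightarrow> real^'n^'m \<Rightarrow>
   ('N::finite \<Rightarrow> real^'n) \<Rightarrow> ('N \<Rightarrow> real^'n) \<Rightarrow> ('N \<Rightarrow> real^'m) \<Rightarrow> nat \<Rightarrow>
   ('N \<Rightarrow> real^'n) \<times> ('N \<Rightarrow> real^'n) \<times> ('N \<Rightarrow> real^'m)" where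
  "cl A B C a \<gamma> \<alpha> \<alpha>u L Lu G K x0 xh0 uh0 0 = (x0, xh0, uh0)"
| "cl A B C a \<gamma> \<alpha> \<alpha>u L Lu G K x0 xh0 uh0 (Suc t) =
     (let (x, xh, uh) = cl A B C a \<gamma> \<alpha> \<alpha>u L Lu G K x0 xh0 uh0 t;
          x' = (\<lambda>j. A *v x j + B *v ctrl K a xh j);
          s = (\<lambda>j. quantv \<alpha> L ((1 / \<gamma>^t) *\<^sub>R (C *v x j - C *v xh j)));
          xh' = (\<lambda>j. A *v xh j + \<gamma>^t *\<^sub>R (G *v s j) + B *v uh j);
          su = (\<lambda>j. quantv \<alpha>u Lu ((1 / \<gamma>^t) *\<^sub>R (ctrl K a xh' j - uh j)));
          uh' = (\<lambda>j. uh j + \<gamma>^t *\<^sub>R su j)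
      in (x', xh', uh'))"

text \<open>Quantization errors Delta_j(t) and Delta_{u,j}(t).\<close>
definition qerr ::
  "real^'n^'n \<Rightarrow> real^'m^'n \<Rightarrow> real^'n^'p \<Rightarrow> real^'N^'N \<Rightarrow>
   real \<Rightarrow> real \<Rightarrow> real \<Rightarrow> nat \<Rightarrow> nat \<Rightarrow> real^'p^'n \<Rightarrow> real^'n^'m \<Rightarrow>
   ('N::finite \<Rightarrow> real^'n) \<Rightarrow> ('N \<Rightarrow> real^'n) \<Rightarrow> ('N \<Rightarrow> real^'m) \<Rightarrow> nat \<Rightarrow> 'N \<Rightarrow> real^'p" where
  "qerr A B C a \<gamma> \<alpha> \<alpha>u L Lu G K x0 xh0 uh0 t j =
     (let (x, xh, uh) = cl A B C a \<gamma> \<alpha> \<alpha>u L Lu G K x0 xh0 uh0 t;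
          e = (1 / \<gamma>^t) *\<^sub>R (C *v x j - C *v xh j)
      in e - quantv \<alpha> L e)"

definition qerr_u ::
  "real^'n^'n \<Rightarrow> real^'m^'n \<Rightarrow> real^'n^'p \<Rightarrow> real^'N^'N \<Rightarrow>
   real \<Rightarrow> real \<Rightarrow> real \<Rightarrow> nat \<Rightarrow> nat \<Rightarrow> real^'p^'n \<Rightarrow> real^'n^'m \<Rightarrow>
   ('N::finite \<Rightarrow> real^'n) \<Rightarrow> ('N \<Rightarrow> real^'n) \<Rightarrow> ('N \<Rightarrow> real^'m) \<Rightarrow> nat \<Rightarrow> 'N \<Rightarrow> real^'m" where
  "qerr_u A B C a \<gamma> \<alpha> \<alpha>u L Lu G K x0 xh0 uh0 t j =
     (let (x, xh, uh) = cl A B C a \<gamma> \<alpha> \<alpha>u L Lu G K x0 xh0 uh0 t;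
          xh' = fst (snd (cl A B C a \<gamma> \<alpha> \<alpha>u L Lu G K x0 xh0 uh0 (Suc t)));
          e = (1 / \<gamma>^t) *\<^sub>R (ctrl K a xh' j - uh j)
      in e - quantv \<alpha>u Lu e)"

end

theory Submission
  imports Defs
begin
lemma det0_left_null:
  fixes M :: "complex^'n^'n"
  assumes "det M = 0" shows "\<exists>y. y \<noteq> 0 \<and> y v* M = 0"
proof -
  have "det (matrix ((*v) (transpose M))) = 0" using assms by simp
  then have "\<not> inj ((*v) (transpose M))"
    using det_nz_iff_inj_gen[OF matrix_vector_mul_linear_gen, of "transpose M"] by simp
  then obtain y1 y2 where "y1 \<noteq> y2" "transpose M *v y1 = transpose M *v y2"
    unfolding inj_on_def by blast
  then have "y1 - y2 \<noteq> 0" "transpose M *v (y1 - y2) = 0"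
    by (auto simp: matrix_vector_mult_diff_distrib)
  then show ?thesis by (intro exI[of _ "y1-y2"]) simp
qed

lemma vm_mat: "(y::'a::comm_ring_1^'n) v* mat c = c *s y"
  by (simp add: vec_eq_iff vector_matrix_mult_def mat_def if_distrib mult.commute cong: if_cong)

lemma eig_left:
  fixes M :: "complex^'n^'n"
  assumes "det (mat \<mu> - M) = 0" shows "\<exists>y. y \<noteq> 0 \<and> y v* M = \<mu> *s y"
proof -
  obtain y where "y \<noteq> 0" "y v* (mat \<mu> - M) = 0" using det0_left_null[OF assms] by blast
  then show ?thesis by (auto simp: vector_matrix_mult_diff_rdistrib vm_mat)
qed

lemma normalize_vec:
  fixes y :: "complex^'n"
  assumes "y \<noteq> 0"
  shows "\<exists>k. y$k \<noteq> 0 \<and> (\<forall>i. cmod (y$i) \<le> cmod (y$k))"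
proof -
  define m where "m = Max (range (\<lambda>i. cmod (y$i)))"
  have "m \<in> range (\<lambda>i. cmod (y$i))" unfolding m_def by (rule Max_in) auto
  then obtain k where k: "m = cmod (y$k)" by auto
  have le: "cmod (y$i) \<le> m" for i unfolding m_def by (rule Max_ge) auto
  from assms obtain i where "y$i \<noteq> 0" by (auto simp: vec_eq_iff)
  with le[of i] k have "y$k \<noteq> 0" by auto
  with le k show ?thesis by auto
qed

lemma left_inv:
  fixes M :: "complex^'n^'n"
  assumes "det M \<noteq> 0" shows "\<exists>R. R ** M = mat 1"
  using assms invertible_det_nz invertible_left_inverse by blast
lemma det_col_replace:
  fixes P :: "complex^'n^'n"
  shows "det (\<chi> i j. if j = k then (P *v 1)$i else P$i$j) = det P"
proof -
  define A where "A = transpose P"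
  define x where "x = (\<Sum>j\<in>UNIV-{k}. row j A)"
  have x: "x \<in> vec.span {row j A |j. j \<noteq> k}"
    unfolding x_def by (intro vec.span_sum) (auto intro: vec.span_base)
  have sum_split: "(\<Sum>j\<in>UNIV. P$i$j) = P$i$k + (\<Sum>j\<in>UNIV-{k}. P$i$j)" for i
    by (metis (no_types, lifting) finite UNIV_I sum.remove)
  have "(\<chi> m. if m = k then row k A + x else row m A) = transpose (\<chi> i j. if j = k then (P *v 1)$i else P$i$j)"
    by (simp add: vec_eq_iff transpose_def row_def A_def x_def matrix_vector_mult_def sum_component sum_split)
  then have "det (transpose (\<chi> i j. if j = k then (P *v 1)$i else P$i$j)) = det A"
    using det_row_span[OF x] by simp
  then show ?thesis by (simp add: A_def)
qed

lemma det_col_const: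
  fixes P :: "complex^'n^'n"
  assumes "P *v 1 = c *s 1"
  shows "det P = c * det (\<chi> i j. if j = k then 1 else P$i$j)"
proof -
  have "det P = det (\<chi> i j. if j = k then c * 1 else P$i$j)"
  proof -
    have "(\<chi> i j. if j = k then (P *v 1)$i else P$i$j) = (\<chi> i j. if j = k then c * 1 else P$i$j)"
      unfolding assms by (simp add: vec_eq_iff)
    then show ?thesis using det_col_replace[of k P] by simp
  qed
  also have "\<dots> = det (transpose (\<chi> i j. if j = k then c * 1 else P$i$j))" by simp
  also have "transpose (\<chi> i j. if j = k then c * 1 else P$i$j) = (\<chi> m. if m = k then c *s 1 else row m (transpose P))"
    by (simp add: vec_eq_iff transpose_def row_def)
  also have "det \<dots> = c * det (\<chi> m. if m = k then 1 else row m (transpose P))"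
    by (rule det_row_mul)
  also have "(\<chi> m. if m = k then 1 else row m (transpose P)) = transpose (\<chi> i j. if j = k then 1 else P$i$j)"
    by (simp add: vec_eq_iff transpose_def row_def)
  finally show ?thesis by simp
qed
lemma poly_det:
  fixes P :: "complex poly^'n^'n"
  shows "poly (det P) z = det (\<chi> i j. poly (P$i$j) z)"
  unfolding det_def by (simp add: poly_sum poly_prod)

lemma poly_charpoly: "poly (charpoly M) z = det (mat z - M)"
  unfolding charpoly_def poly_det
  by (rule arg_cong[where f=det]) (simp add: vec_eq_iff mat_def)

lemma lap_rowsum: "(\<Sum>j\<in>UNIV. laplacian a $i$j) = 0"
  unfolding laplacian_def by (simp add: sum_subtractf)

lemma cmat_lap_one: "cmat (laplacian a) *v 1 = 0"
proof -
  have "(\<Sum>j\<in>UNIV. complex_of_real (laplacian a $i$j)) = 0" for i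
    using lap_rowsum[of a i] by (metis of_real_0 of_real_sum)
  then show ?thesis by (simp add: vec_eq_iff matrix_vector_mult_def cmat_def)
qed

lemma sum_vm_zero:
  fixes Lc :: "complex^'N^'N"
  assumes "Lc *v 1 = 0"
  shows "(\<Sum>j\<in>UNIV. (r v* Lc)$j) = 0"
proof -
  have "(\<Sum>j\<in>UNIV. (r v* Lc)$j) = (\<Sum>i\<in>UNIV. r$i * (\<Sum>j\<in>UNIV. Lc$i$j))"
    by (simp add: vector_matrix_mult_def sum_distrib_left) (rule sum.swap)
  also have "\<dots> = 0" using assms by (simp add: vec_eq_iff matrix_vector_mult_def)
  finally show ?thesis .
qed

lemma lap_left:
  fixes a :: "real^'N::finite^'N"
  assumes "z \<in> lap_eigs_rest a"
  shows "\<exists>r. r \<noteq> 0 \<and> r v* cmat (laplacian a) = z *s r \<and> (\<Sum>i\<in>UNIV. r$i) = 0"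
proof -
  define Lc where "Lc = cmat (laplacian a)"
  have L1: "Lc *v 1 = 0" unfolding Lc_def by (rule cmat_lap_one)
  show ?thesis
  proof (cases "z = 0")
    case False
    with assms have "order z (charpoly Lc) \<ge> 1" by (simp add: lap_eigs_rest_def Lc_def)
    then have "poly (charpoly Lc) z = 0" using order_root by fastforce
    then obtain r where r: "r \<noteq> 0" "r v* Lc = z *s r"
      using eig_left poly_charpoly by metis
    have "0 = (\<Sum>j\<in>UNIV. (r v* Lc)$j)" using sum_vm_zero[OF L1] by simp
    also have "\<dots> = z * (\<Sum>j\<in>UNIV. r$j)" by (simp add: r sum_distrib_left)
    finally have "(\<Sum>j\<in>UNIV. r$j) = 0" using False by simp
    with r show ?thesis by (auto simp: Lc_def)
  next
    case True
    with assms have "order 0 (charpoly Lc) \<ge> 2" by (simp add: lap_eigs_rest_def Lc_def)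
    then have dv: "[:0,1:]^2 dvd charpoly Lc"
      using order_divides[of 0 2 "charpoly Lc"] by simp
    obtain k :: 'N where True by simp
    define E :: "complex^'N^'N" where "E = (\<chi> i j. if j = k then 1 else 0)"
    define M where "M = Lc + E"
    have E1: "E *v 1 = 1" by (simp add: vec_eq_iff matrix_vector_mult_def E_def)
    have mat1: "mat w *v 1 = (w::complex) *s 1" for w
      by (simp add: vec_eq_iff matrix_vector_mult_def mat_def)
    have pw: "w * det (mat w - M) = (w - 1) * det (mat w - Lc)" for w
    proof -
      define P' where "P' = (\<chi> i j. if j = k then 1 else (mat w - Lc)$i$j)"
      have a1: "(mat w - Lc) *v 1 = w *s 1"
        by (simp add: matrix_vector_mult_diff_rdistrib mat1 L1)
      have a2: "(mat w - M) *v 1 = (w - 1) *s 1"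
        by (simp add: M_def matrix_vector_mult_diff_rdistrib matrix_vector_mult_add_rdistrib mat1 L1 E1
              vec_eq_iff algebra_simps)
      have a3: "(\<chi> i j. if j = k then 1 else (mat w - M)$i$j) = P'"
        by (simp add: vec_eq_iff P'_def M_def E_def)
      show ?thesis using det_col_const[OF a1, of k] det_col_const[OF a2, of k]
        unfolding a3 P'_def[symmetric] by simp
    qed
    have eq: "[:0,1:] * charpoly M = [:-1,1:] * charpoly Lc"
      by (rule poly_eq_poly_eq_iff[THEN iffD1]) (simp add: fun_eq_iff poly_charpoly pw algebra_simps)
    have "[:0,1:] * [:0,1:] dvd [:-1,1:] * charpoly Lc"
      using dv unfolding power2_eq_square by (rule dvd_mult)
    then have "[:0,1:] * [:0,1:] dvd [:0,1:] * charpoly M"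
      by (simp only: eq)
    then have "[:0,1:] dvd charpoly M"
      by (subst (asm) dvd_mult_cancel_left) auto
    then have "poly (charpoly M) 0 = 0" by (simp add: poly_eq_0_iff_dvd)
    then obtain r where r: "r \<noteq> 0" "r v* M = 0 *s r"
      using eig_left poly_charpoly by metis
    have rE: "(r v* E)$j = (if j = k then (\<Sum>i\<in>UNIV. r$i) else 0)" for j
      by (simp add: vector_matrix_mult_def E_def)
    have "0 = (\<Sum>j\<in>UNIV. (r v* M)$j)" using r by simp
    also have "\<dots> = (\<Sum>j\<in>UNIV. (r v* Lc)$j) + (\<Sum>j\<in>UNIV. (r v* E)$j)"
      by (simp add: M_def vector_matrix_mult_add_rdistrib sum.distrib)
    also have "\<dots> = (\<Sum>i\<in>UNIV. r$i)" using sum_vm_zero[OF L1] by (simp add: rE)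
    finally have s0: "(\<Sum>i\<in>UNIV. r$i) = 0" by simp
    then have "r v* E = 0" by (simp add: vec_eq_iff rE)
    then have "r v* Lc = 0" using r by (simp add: M_def vector_matrix_mult_add_rdistrib)
    with r s0 True show ?thesis by (auto simp: Lc_def)
  qed
qed


locale net =
  fixes A :: "real^'n^'n" and B :: "real^'m^'n" and C :: "real^'n^'p" and a :: "real^'N::finite^'N"
    and \<gamma> \<alpha> \<alpha>u :: real and L Lu :: nat and G :: "real^'p^'n" and K :: "real^'n^'m"
    and x0 xh0 :: "'N \<Rightarrow> real^'n" and uh0 :: "'N \<Rightarrow> real^'m"
  assumes gpos: "\<gamma> > 0"
begin

definition "X t = fst (cl A B C a \<gamma> \<alpha> \<alpha>u L Lu G K x0 xh0 uh0 t)"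
definition "XH t = fst (snd (cl A B C a \<gamma> \<alpha> \<alpha>u L Lu G K x0 xh0 uh0 t))"
definition "UH t = snd (snd (cl A B C a \<gamma> \<alpha> \<alpha>u L Lu G K x0 xh0 uh0 t))"
definition "E t j = X t j - XH t j"
definition "Q t j = qerr A B C a \<gamma> \<alpha> \<alpha>u L Lu G K x0 xh0 uh0 t j"
definition "QU t j = qerr_u A B C a \<gamma> \<alpha> \<alpha>u L Lu G K x0 xh0 uh0 t j"

lemma cl_eq: "cl A B C a \<gamma> \<alpha> \<alpha>u L Lu G K x0 xh0 uh0 t = (X t, XH t, UH t)"
  by (simp add: X_def XH_def UH_def)

lemma X0: "X 0 = x0" and XH0: "XH 0 = xh0" and UH0: "UH 0 = uh0"
  by (simp_all add: X_def XH_def UH_def)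

lemma X_Suc: "X (Suc t) j = A *v X t j + B *v ctrl K a (XH t) j"
  by (simp add: X_def[of "Suc t"] cl_eq Let_def)

lemma XH_Suc: "XH (Suc t) j = A *v XH t j
   + \<gamma>^t *\<^sub>R (G *v quantv \<alpha> L ((1 / \<gamma>^t) *\<^sub>R (C *v X t j - C *v XH t j))) + B *v UH t j"
  by (simp add: XH_def[of "Suc t"] cl_eq Let_def)

lemma UH_Suc: "UH (Suc t) j = UH t j
   + \<gamma>^t *\<^sub>R quantv \<alpha>u Lu ((1 / \<gamma>^t) *\<^sub>R (ctrl K a (XH (Suc t)) j - UH t j))"
  by (simp add: UH_def[of "Suc t"] XH_def[of "Suc t"] cl_eq Let_def)

lemma Q_eq: "Q t j = (1 / \<gamma>^t) *\<^sub>R (C *v X t j - C *v XH t j)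
    - quantv \<alpha> L ((1 / \<gamma>^t) *\<^sub>R (C *v X t j - C *v XH t j))"
  by (simp add: Q_def qerr_def cl_eq Let_def)

lemma QU_eq: "QU t j = (1 / \<gamma>^t) *\<^sub>R (ctrl K a (XH (Suc t)) j - UH t j)
    - quantv \<alpha>u Lu ((1 / \<gamma>^t) *\<^sub>R (ctrl K a (XH (Suc t)) j - UH t j))"
  by (simp add: QU_def qerr_u_def cl_eq Let_def XH_def[of "Suc t"])

lemma UH_Suc': "ctrl K a (XH (Suc t)) j - UH (Suc t) j = \<gamma>^t *\<^sub>R QU t j"
proof -
  have g: "\<gamma>^t \<noteq> 0" using gpos by simp
  show ?thesis unfolding UH_Suc QU_eq using g gpos by (simp add: algebra_simps)
qed

lemma E_Suc: "E (Suc t) j = (A - G ** C) *v E t j + \<gamma>^t *\<^sub>R (G *v Q t j)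
   + B *v (ctrl K a (XH t) j - UH t j)"
proof -
  have g: "\<gamma>^t \<noteq> 0" using gpos by simp
  define e where "e = (1 / \<gamma>^t) *\<^sub>R (C *v X t j - C *v XH t j)"
  have qv: "quantv \<alpha> L e = e - Q t j" by (simp add: Q_eq e_def)
  have "\<gamma>^t *\<^sub>R (G *v quantv \<alpha> L e) = G *v (C *v E t j) - \<gamma>^t *\<^sub>R (G *v Q t j)"
    unfolding qv using g gpos
    by (simp add: e_def E_def matrix_vector_mult_diff_distrib matrix_vector_mult_scaleR scaleR_diff_right)
  then show ?thesis
    unfolding E_def X_Suc XH_Suc e_def[symmetric]
    by (simp add: matrix_vector_mult_diff_distrib matrix_vector_mult_diff_rdistrib matrix_vector_mul_assoc algebra_simps)
qed

end

lemma comp_bound: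
  fixes M :: "real^'a^'b"
  assumes "infnorm v \<le> c"
  shows "\<bar>(M *v v)$i\<bar> \<le> onorm ((*v) M) * (sqrt CARD('a) * c)"
proof -
  have "\<bar>(M *v v)$i\<bar> \<le> norm (M *v v)" by (rule component_le_norm_cart)
  also have "\<dots> \<le> onorm ((*v) M) * norm v"
    by (rule onorm[OF matrix_vector_mul_bounded_linear])
  also have "\<dots> \<le> onorm ((*v) M) * (sqrt CARD('a) * c)"
  proof (rule mult_left_mono)
    have "norm v \<le> sqrt DIM(real^'a) * infnorm v" by (rule norm_le_infnorm)
    also have "\<dots> \<le> sqrt CARD('a) * c" using assms by (simp add: mult_left_mono)
    finally show "norm v \<le> sqrt CARD('a) * c" .
    show "0 \<le> onorm ((*v) M)" by (rule onorm_pos_le[OF matrix_vector_mul_bounded_linear])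
  qed
  finally show ?thesis .
qed

lemma geo_sum_le:
  fixes \<gamma> \<rho> :: real
  assumes "0 < \<gamma>" "\<gamma> < \<rho>" "\<rho> < 1"
  shows "(\<Sum>s<t. \<gamma>^s) \<le> 1 / (1 - \<rho>)"
proof -
  have "(\<Sum>s<t. \<gamma>^s) = (1 - \<gamma>^t) / (1 - \<gamma>)" using assms by (simp add: sum_gp_strict)
  also have "\<dots> \<le> 1 / (1 - \<gamma>)" using assms by (simp add: divide_right_mono)
  also have "\<dots> \<le> 1 / (1 - \<rho>)" using assms by (simp add: frac_le)
  finally show ?thesis .
qed

lemma beta_sum_le:
  fixes \<gamma> \<rho> cG cB :: real
  assumes "0 < \<gamma>" "\<gamma> < \<rho>" "\<rho> < 1" "0 \<le> cG" "0 \<le> cB"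
  shows "(\<Sum>s<t. cG * \<gamma>^s + cB * (if s = 0 then 0 else \<gamma>^(s-1))) \<le> (cG + cB) / (1 - \<rho>)"
proof -
  have g1: "(\<Sum>s<t. \<gamma>^s) \<le> 1 / (1 - \<rho>)" for t using geo_sum_le[OF assms(1-3)] .
  have g2: "(\<Sum>s<t. (if s = 0 then 0 else \<gamma>^(s-1))) \<le> 1 / (1 - \<rho>)"
  proof (cases t)
    case 0 then show ?thesis using assms by simp
  next
    case (Suc t')
    have "(\<Sum>s<t. (if s = 0 then 0 else \<gamma>^(s-1))) = (\<Sum>s<t'. \<gamma>^s)"
      unfolding Suc sum.lessThan_Suc_shift by simp
    then show ?thesis using g1 by simp
  qed
  have "(\<Sum>s<t. cG * \<gamma>^s + cB * (if s = 0 then 0 else \<gamma>^(s-1)))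
      = cG * (\<Sum>s<t. \<gamma>^s) + cB * (\<Sum>s<t. (if s = 0 then 0 else \<gamma>^(s-1)))"
    by (simp add: sum.distrib sum_distrib_left)
  also have "\<dots> \<le> cG * (1 / (1 - \<rho>)) + cB * (1 / (1 - \<rho>))"
    using g1 g2 assms by (intro add_mono mult_left_mono) auto
  also have "\<dots> = (cG + cB) / (1 - \<rho>)" by (simp add: add_divide_distrib)
  finally show ?thesis .
qed

lemma growth:
  fixes \<zeta> \<delta> :: "nat \<Rightarrow> complex"
  assumes rec: "\<And>t. \<zeta> (Suc t) = \<mu> * \<zeta> t + \<delta> t" and mu: "1 \<le> cmod \<mu>"
    and D: "\<And>t. (\<Sum>s<t. cmod (\<delta> s)) \<le> D" and lim: "\<zeta> \<longlonglongrightarrow> 0"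
  shows "cmod (\<zeta> 0) \<le> D"
proof (rule ccontr)
  assume "\<not> ?thesis"
  then have gt: "D < cmod (\<zeta> 0)" by simp
  have ind: "cmod (\<zeta> t) \<ge> cmod \<mu> ^ t * (cmod (\<zeta> 0) - (\<Sum>s<t. cmod (\<delta> s)))" for t
  proof (induction t)
    case 0 then show ?case by simp
  next
    case (Suc t)
    define X where "X = cmod (\<zeta> 0) - (\<Sum>s<t. cmod (\<delta> s))"
    have p1: "1 \<le> cmod \<mu> ^ Suc t" using mu by (rule one_le_power)
    have "cmod (\<zeta> (Suc t)) \<ge> cmod (\<mu> * \<zeta> t) - cmod (\<delta> t)"
      unfolding rec by (metis norm_diff_ineq diff_minus_eq_add norm_minus_cancel)
    also have "cmod (\<mu> * \<zeta> t) = cmod \<mu> * cmod (\<zeta> t)" by (simp add: norm_mult)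
    finally have "cmod (\<zeta> (Suc t)) \<ge> cmod \<mu> * cmod (\<zeta> t) - cmod (\<delta> t)" .
    moreover have "cmod \<mu> * cmod (\<zeta> t) \<ge> cmod \<mu> * (cmod \<mu> ^ t * X)"
      using Suc.IH mu unfolding X_def by (intro mult_left_mono) auto
    moreover have "cmod (\<delta> t) \<le> cmod \<mu> ^ Suc t * cmod (\<delta> t)"
      using p1 by (simp add: mult_le_cancel_right1)
    ultimately have "cmod (\<zeta> (Suc t)) \<ge> cmod \<mu> ^ Suc t * (X - cmod (\<delta> t))"
      by (simp add: algebra_simps)
    then show ?case by (simp add: X_def algebra_simps)
  qed
  have pos: "cmod (\<zeta> t) \<ge> cmod (\<zeta> 0) - D" for t
  proof -
    have "cmod (\<zeta> 0) - (\<Sum>s<t. cmod (\<delta> s)) \<ge> cmod (\<zeta> 0) - D" using D[of t] by simp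
    then have h: "cmod (\<zeta> 0) - (\<Sum>s<t. cmod (\<delta> s)) > 0" using gt by simp
    have "1 \<le> cmod \<mu> ^ t" using mu by (rule one_le_power)
    then have "cmod \<mu> ^ t * (cmod (\<zeta> 0) - (\<Sum>s<t. cmod (\<delta> s))) \<ge> cmod (\<zeta> 0) - (\<Sum>s<t. cmod (\<delta> s))"
      using h by (simp add: mult_le_cancel_right1)
    then show ?thesis using ind[of t] D[of t] by linarith
  qed
  have "(\<lambda>t. cmod (\<zeta> t)) \<longlonglongrightarrow> 0" using tendsto_norm[OF lim] by simp
  then have "eventually (\<lambda>t. cmod (\<zeta> t) < cmod (\<zeta> 0) - D) sequentially"
    using gt by (intro order_tendstoD) auto
  then obtain t where "cmod (\<zeta> t) < cmod (\<zeta> 0) - D" by (meson eventually_sequentially order_refl)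
  with pos[of t] show False by simp
qed


definition cv :: "real^'k \<Rightarrow> complex^'k" where
  "cv v = (\<chi> i. complex_of_real (v$i))"

definition cdot :: "complex^'k \<Rightarrow> complex^'k \<Rightarrow> complex" where
  "cdot y v = (\<Sum>i\<in>UNIV. y$i * v$i)"

lemma cv_add[simp]: "cv (u + v) = cv u + cv v" by (simp add: cv_def vec_eq_iff)
lemma cv_diff[simp]: "cv (u - v) = cv u - cv v" by (simp add: cv_def vec_eq_iff)
lemma cv_zero[simp]: "cv 0 = 0" by (simp add: cv_def vec_eq_iff)
lemma cv_scaleR[simp]: "cv (c *\<^sub>R v) = complex_of_real c *s cv v" by (simp add: cv_def vec_eq_iff)
lemma cv_sum: "cv (sum f S) = sum (\<lambda>x. cv (f x)) S"
  by (induction S rule: infinite_finite_induct) auto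
lemma cv_mv[simp]: "cv (M *v v) = cmat M *v cv v"
  by (simp add: cv_def cmat_def vec_eq_iff matrix_vector_mult_def)
lemma cmat_diff[simp]: "cmat (M - N) = cmat M - cmat N" by (simp add: cmat_def vec_eq_iff)
lemma cmat_mul[simp]: "cmat (M ** N) = cmat M ** cmat N"
  by (simp add: cmat_def vec_eq_iff matrix_matrix_mult_def)

lemma cdot_add[simp]: "cdot y (u + v) = cdot y u + cdot y v"
  by (simp add: cdot_def sum.distrib algebra_simps)
lemma cdot_diff[simp]: "cdot y (u - v) = cdot y u - cdot y v"
  by (simp add: cdot_def sum_subtractf algebra_simps)
lemma cdot_smult[simp]: "cdot y (c *s v) = c * cdot y v"
  by (simp add: cdot_def sum_distrib_left algebra_simps)
lemma cdot_zero[simp]: "cdot y 0 = 0" by (simp add: cdot_def)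
lemma cdot_lsmult[simp]: "cdot (c *s y) v = c * cdot y v"
  by (simp add: cdot_def sum_distrib_left algebra_simps)
lemma cdot_ladd: "cdot (y + w) v = cdot y v + cdot w v"
  by (simp add: cdot_def sum.distrib algebra_simps)
lemma cdot_sum: "cdot y (sum f S) = (\<Sum>x\<in>S. cdot y (f x))"
  by (induction S rule: infinite_finite_induct) auto
lemma cdot_mv: "cdot y (M *v v) = cdot (y v* M) v"
  unfolding cdot_def matrix_vector_mult_def vector_matrix_mult_def
  by (simp add: sum_distrib_left sum_distrib_right mult.assoc mult.left_commute) (rule sum.swap)

lemma cdot_bound:
  fixes y :: "complex^'k" and b :: real
  assumes "\<forall>i. cmod (y$i) \<le> 1" "\<forall>i. \<bar>v$i\<bar> \<le> b"
  shows "cmod (cdot y (cv v)) \<le> CARD('k) * b"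
proof -
  have "cmod (cdot y (cv v)) \<le> (\<Sum>i\<in>UNIV. cmod (y$i * cv v $ i))"
    unfolding cdot_def by (rule norm_sum)
  also have "\<dots> \<le> (\<Sum>i\<in>(UNIV::'k set). b)"
  proof (rule sum_mono)
    fix i
    have "cmod (y$i * cv v $ i) = cmod (y$i) * \<bar>v$i\<bar>" by (simp add: cv_def norm_mult)
    also have "\<dots> \<le> 1 * b" using assms by (intro mult_mono) auto
    finally show "cmod (y$i * cv v $ i) \<le> b" by simp
  qed
  finally show ?thesis by simp
qed

lemma cdot_tendsto:
  assumes "(f \<longlonglongrightarrow> 0)"
  shows "(\<lambda>t. cdot y (cv (f t))) \<longlonglongrightarrow> 0"
proof -
  have "(\<lambda>t. \<Sum>i\<in>UNIV. y$i * complex_of_real (f t $ i)) \<longlonglongrightarrow> (\<Sum>i\<in>UNIV. y$i * complex_of_real 0)"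
  proof (intro tendsto_sum tendsto_mult tendsto_const tendsto_of_real)
    fix i
    show "(\<lambda>t. f t $ i) \<longlonglongrightarrow> 0" using tendsto_vec_nth[OF assms, of i] by simp
  qed
  then show ?thesis by (simp add: cdot_def cv_def)
qed


lemma mv_neg: "(M::'a::ring_1^'n^'m) *v (- v) = - (M *v v)"
  by (simp add: vec_eq_iff matrix_vector_mult_def sum_negf)

lemma ctrl_lap:
  fixes a :: "real^'N::finite^'N"
  assumes nn: "\<forall>i j. a$i$j \<ge> 0"
  shows "ctrl K a xh i = - (K *v (\<Sum>j\<in>UNIV. laplacian a $i$j *\<^sub>R xh j))"
proof -
  have "(\<Sum>j\<in>{j. a$i$j > 0}. a$i$j *\<^sub>R (xh j - xh i)) = (\<Sum>j\<in>UNIV. a$i$j *\<^sub>R (xh j - xh i))"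
  proof (rule sum.mono_neutral_left)
    show "\<forall>j\<in>UNIV - {j. a$i$j > 0}. a$i$j *\<^sub>R (xh j - xh i) = 0"
      using nn by (auto simp: not_less intro: antisym)
  qed auto
  also have "\<dots> = (\<Sum>j\<in>UNIV. a$i$j *\<^sub>R xh j) - (\<Sum>j\<in>UNIV. a$i$j) *\<^sub>R xh i"
    by (simp add: scaleR_diff_right sum_subtractf scaleR_sum_left)
  also have "\<dots> = - (\<Sum>j\<in>UNIV. laplacian a $i$j *\<^sub>R xh j)"
    by (simp add: laplacian_def scaleR_left_diff_distrib sum_subtractf if_distrib[of "\<lambda>x. x *\<^sub>R _"] cong: if_cong)
  finally show ?thesis by (simp add: ctrl_def mv_neg)
qed


context net begin

lemma d_bound:
  assumes Wb: "\<forall>t j. infnorm (Q t j) \<le> W" and Wub: "\<forall>t j. infnorm (QU t j) \<le> Wu"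
    and init: "\<forall>j. UH 0 j = ctrl K a (XH 0) j" and LG: "onorm ((*v) G) \<le> LG"
  shows "\<bar>(E (Suc t) j - (A - G ** C) *v E t j)$i\<bar>
     \<le> LG * (sqrt CARD('p) * W) * \<gamma>^t
      + onorm ((*v) B) * (sqrt CARD('m) * Wu) * (if t = 0 then 0 else \<gamma>^(t-1))"
proof -
  have W0: "0 \<le> W" using Wb infnorm_pos_le order_trans by metis
  have gt: "0 \<le> \<gamma>^t" using gpos by simp
  have eq: "E (Suc t) j - (A - G ** C) *v E t j
      = \<gamma>^t *\<^sub>R (G *v Q t j) + B *v (ctrl K a (XH t) j - UH t j)"
    unfolding E_Suc by simp
  have b1: "\<bar>(G *v Q t j)$i\<bar> \<le> LG * (sqrt CARD('p) * W)"
  proof -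
    have "\<bar>(G *v Q t j)$i\<bar> \<le> onorm ((*v) G) * (sqrt CARD('p) * W)"
      using Wb by (intro comp_bound) auto
    also have "\<dots> \<le> LG * (sqrt CARD('p) * W)" using LG W0 by (intro mult_right_mono) auto
    finally show ?thesis .
  qed
  have b2: "\<bar>(B *v (ctrl K a (XH t) j - UH t j))$i\<bar>
      \<le> onorm ((*v) B) * (sqrt CARD('m) * Wu) * (if t = 0 then 0 else \<gamma>^(t-1))"
  proof (cases t)
    case 0 then show ?thesis using init by simp
  next
    case (Suc t')
    have "(B *v (ctrl K a (XH t) j - UH t j))$i = \<gamma>^t' * (B *v QU t' j)$i"
      unfolding Suc UH_Suc' by (simp add: matrix_vector_mult_scaleR)
    also have "\<bar>\<dots>\<bar> \<le> \<gamma>^t' * (onorm ((*v) B) * (sqrt CARD('m) * Wu))"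
    proof -
      have "\<bar>(B *v QU t' j)$i\<bar> \<le> onorm ((*v) B) * (sqrt CARD('m) * Wu)"
        using Wub by (intro comp_bound) auto
      then show ?thesis using gpos by (simp add: abs_mult mult_left_mono)
    qed
    finally show ?thesis using Suc by (simp add: algebra_simps)
  qed
  have "\<bar>(E (Suc t) j - (A - G ** C) *v E t j)$i\<bar> \<le> \<gamma>^t * \<bar>(G *v Q t j)$i\<bar> + \<bar>(B *v (ctrl K a (XH t) j - UH t j))$i\<bar>"
    unfolding eq using gt by (simp add: abs_mult abs_triangle_ineq[THEN order_trans])
  also have "\<dots> \<le> \<gamma>^t * (LG * (sqrt CARD('p) * W)) + onorm ((*v) B) * (sqrt CARD('m) * Wu) * (if t = 0 then 0 else \<gamma>^(t-1))"
    using b1 b2 gt by (intro add_mono mult_left_mono) auto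
  finally show ?thesis by (simp add: algebra_simps)
qed

end

context net begin

lemma A2_core:
  assumes Wb: "\<forall>t j. infnorm (Q t j) \<le> W" and Wub: "\<forall>t j. infnorm (QU t j) \<le> Wu"
    and init: "\<forall>j. UH 0 j = ctrl K a (XH 0) j" and LG: "onorm ((*v) G) \<le> LG"
    and rho: "\<gamma> < \<rho>" "\<rho> < 1"
    and Econv: "(\<lambda>t. E t j0) \<longlonglongrightarrow> 0"
    and y: "y v* cmat (A - G ** C) = \<mu> *s y" "\<forall>i. cmod (y$i) \<le> 1" and mu: "1 \<le> cmod \<mu>"
  shows "cmod (cdot y (cv (E 0 j0)))
     \<le> CARD('n) * ((LG * (sqrt CARD('p) * W) + onorm ((*v) B) * (sqrt CARD('m) * Wu)) / (1 - \<rho>))"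
proof -
  define cG where "cG = LG * (sqrt CARD('p) * W)"
  define cB where "cB = onorm ((*v) B) * (sqrt CARD('m) * Wu)"
  have W0: "0 \<le> W" using Wb infnorm_pos_le order_trans by metis
  have Wu0: "0 \<le> Wu" using Wub infnorm_pos_le order_trans by metis
  have LG0: "0 \<le> LG" using LG onorm_pos_le[OF matrix_vector_mul_bounded_linear] order_trans by metis
  have cG0: "0 \<le> cG" unfolding cG_def using W0 LG0 by simp
  have cB0: "0 \<le> cB" unfolding cB_def using Wu0 onorm_pos_le[OF matrix_vector_mul_bounded_linear, of B] by simp
  define d where "d t = E (Suc t) j0 - (A - G ** C) *v E t j0" for t
  define \<beta> where "\<beta> s = cG * \<gamma>^s + cB * (if s = 0 then 0 else \<gamma>^(s-1))" for s
  have db: "\<bar>d t $ i\<bar> \<le> \<beta> t" for t i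
    unfolding d_def \<beta>_def cG_def cB_def using d_bound[OF Wb Wub init LG] .
  define \<zeta> where "\<zeta> t = cdot y (cv (E t j0))" for t
  define \<delta> where "\<delta> t = cdot y (cv (d t))" for t
  have rec: "\<zeta> (Suc t) = \<mu> * \<zeta> t + \<delta> t" for t
  proof -
    have "E (Suc t) j0 = (A - G ** C) *v E t j0 + d t" by (simp add: d_def)
    then have "\<zeta> (Suc t) = cdot (y v* cmat (A - G ** C)) (cv (E t j0)) + \<delta> t"
      unfolding \<zeta>_def \<delta>_def by (simp only: cv_add cdot_add cv_mv cdot_mv)
    then show ?thesis unfolding y(1) \<zeta>_def by simp
  qed
  have D: "(\<Sum>s<t. cmod (\<delta> s)) \<le> CARD('n) * ((cG + cB) / (1 - \<rho>))" for t
  proof -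
    have "(\<Sum>s<t. cmod (\<delta> s)) \<le> (\<Sum>s<t. CARD('n) * \<beta> s)"
      unfolding \<delta>_def by (intro sum_mono cdot_bound) (use y db in auto)
    also have "\<dots> = CARD('n) * (\<Sum>s<t. \<beta> s)" by (simp add: sum_distrib_left)
    also have "\<dots> \<le> CARD('n) * ((cG + cB) / (1 - \<rho>))"
      unfolding \<beta>_def using beta_sum_le[OF gpos rho cG0 cB0] by (intro mult_left_mono) auto
    finally show ?thesis .
  qed
  have "\<zeta> \<longlonglongrightarrow> 0" unfolding \<zeta>_def by (rule cdot_tendsto[OF Econv])
  from growth[OF rec mu D this] show ?thesis unfolding \<zeta>_def cG_def cB_def .
qed

end

lemma cdot_neg[simp]: "cdot y (- v) = - cdot y v"
  by (simp add: cdot_def sum_negf)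
lemma cv_neg[simp]: "cv (- v) = - cv v" by (simp add: cv_def vec_eq_iff)
lemma cdot_ldiff: "cdot (y - w) v = cdot y v - cdot w v"
  by (simp add: cdot_def sum_subtractf algebra_simps)
lemma sum_vm: "(\<Sum>i\<in>UNIV. r$i * (\<Sum>j\<in>UNIV. M$i$j * g j)) = (\<Sum>j\<in>UNIV. (r v* M)$j * g j)"
  by (simp add: vector_matrix_mult_def sum_distrib_left sum_distrib_right mult.assoc) (rule sum.swap)

context net begin

lemma A1_core:
  assumes Wb: "\<forall>t j. infnorm (Q t j) \<le> W" and Wub: "\<forall>t j. infnorm (QU t j) \<le> Wu"
    and init: "\<forall>j. UH 0 j = ctrl K a (XH 0) j" and LG: "onorm ((*v) G) \<le> LG"
    and rho: "\<gamma> < \<rho>" "\<rho> < 1"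
    and Econv: "\<forall>j. (\<lambda>t. E t j) \<longlonglongrightarrow> 0"
    and cons: "\<forall>i j. (\<lambda>t. X t i - X t j) \<longlonglongrightarrow> 0"
    and nn: "\<forall>i j. a$i$j \<ge> 0"
    and r: "r v* cmat (laplacian a) = z *s r" "(\<Sum>i\<in>UNIV. r$i) = 0" "\<forall>j. cmod (r$j) \<le> 1"
    and y: "y v* (cmat A - mat z ** cmat B ** cmat K) = \<mu> *s y"
    and q: "q v* (mat \<mu> - cmat (A - G ** C)) = z *s (y v* (cmat B ** cmat K))" "\<forall>i. cmod (q$i) \<le> 1"
    and mu: "1 \<le> cmod \<mu>"
  shows "cmod (\<Sum>j\<in>UNIV. r$j * (cdot y (cv (X 0 j)) + cdot q (cv (E 0 j))))
     \<le> CARD('N) * (CARD('n) * ((LG * (sqrt CARD('p) * W) + onorm ((*v) B) * (sqrt CARD('m) * Wu)) / (1 - \<rho>)))"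
proof -
  define cG where "cG = LG * (sqrt CARD('p) * W)"
  define cB where "cB = onorm ((*v) B) * (sqrt CARD('m) * Wu)"
  have W0: "0 \<le> W" using Wb infnorm_pos_le order_trans by metis
  have Wu0: "0 \<le> Wu" using Wub infnorm_pos_le order_trans by metis
  have LG0: "0 \<le> LG" using LG onorm_pos_le[OF matrix_vector_mul_bounded_linear] order_trans by metis
  have cG0: "0 \<le> cG" unfolding cG_def using W0 LG0 by simp
  have cB0: "0 \<le> cB" unfolding cB_def using Wu0 onorm_pos_le[OF matrix_vector_mul_bounded_linear, of B] by simp
  define F where "F = A - G ** C"
  define d where "d t j = E (Suc t) j - F *v E t j" for t j
  define \<beta> where "\<beta> s = cG * \<gamma>^s + cB * (if s = 0 then 0 else \<gamma>^(s-1))" for s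
  have db: "\<bar>d t j $ i\<bar> \<le> \<beta> t" for t i j
    unfolding d_def \<beta>_def cG_def cB_def F_def using d_bound[OF Wb Wub init LG] .
  define h0 where "h0 = y v* (cmat B ** cmat K)"
  define Lc where "Lc = cmat (laplacian a)"
  define P where "P t = (\<Sum>j\<in>UNIV. r$j * cdot y (cv (X t j)))" for t
  define Qs where "Qs t = (\<Sum>j\<in>UNIV. r$j * cdot q (cv (E t j)))" for t
  define \<delta> where "\<delta> t = (\<Sum>j\<in>UNIV. r$j * cdot q (cv (d t j)))" for t
  define \<zeta> where "\<zeta> t = P t + Qs t" for t
  have yA: "y v* cmat A = \<mu> *s y + z *s h0"
  proof -
    have "y v* (mat z ** cmat B ** cmat K) = z *s h0"
      by (simp add: h0_def vector_matrix_mul_assoc[symmetric] vm_mat scalar_vector_matrix_assoc)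
    then show ?thesis using y by (simp add: vector_matrix_mult_diff_rdistrib algebra_simps)
  qed
  have qF: "q v* cmat F = \<mu> *s q - z *s h0"
    using q(1) by (simp add: F_def h0_def vector_matrix_mult_diff_rdistrib vm_mat algebra_simps)
  have step1: "cdot y (cv (X (Suc t) i)) = cdot (y v* cmat A) (cv (X t i))
      - (\<Sum>j\<in>UNIV. Lc$i$j * cdot h0 (cv (XH t j)))" for t i
  proof -
    have "cdot y (cv (B *v ctrl K a (XH t) i))
        = - cdot h0 (cv (\<Sum>j\<in>UNIV. laplacian a $i$j *\<^sub>R XH t j))"
      unfolding ctrl_lap[OF nn] by (simp add: mv_neg cdot_mv h0_def vector_matrix_mul_assoc)
    also have "\<dots> = - (\<Sum>j\<in>UNIV. Lc$i$j * cdot h0 (cv (XH t j)))"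
      by (simp add: cv_sum cdot_sum Lc_def cmat_def)
    finally show ?thesis unfolding X_Suc by (simp add: cdot_mv)
  qed
  have Prec: "P (Suc t) = \<mu> * P t + z * (\<Sum>j\<in>UNIV. r$j * cdot h0 (cv (E t j)))" for t
  proof -
    have "P (Suc t) = (\<Sum>i\<in>UNIV. r$i * cdot (y v* cmat A) (cv (X t i)))
        - (\<Sum>i\<in>UNIV. r$i * (\<Sum>j\<in>UNIV. Lc$i$j * cdot h0 (cv (XH t j))))"
      unfolding P_def step1 by (simp add: right_diff_distrib sum_subtractf)
    also have "(\<Sum>i\<in>UNIV. r$i * (\<Sum>j\<in>UNIV. Lc$i$j * cdot h0 (cv (XH t j))))
        = z * (\<Sum>j\<in>UNIV. r$j * cdot h0 (cv (XH t j)))"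
      unfolding sum_vm Lc_def r(1) by (simp add: sum_distrib_left mult.assoc)
    also have "(\<Sum>j\<in>UNIV. r$j * cdot h0 (cv (XH t j)))
        = (\<Sum>j\<in>UNIV. r$j * cdot h0 (cv (X t j))) - (\<Sum>j\<in>UNIV. r$j * cdot h0 (cv (E t j)))"
      by (simp add: E_def right_diff_distrib sum_subtractf)
    also have "(\<Sum>i\<in>UNIV. r$i * cdot (y v* cmat A) (cv (X t i)))
        = \<mu> * P t + z * (\<Sum>j\<in>UNIV. r$j * cdot h0 (cv (X t j)))"
      unfolding yA P_def by (simp add: cdot_ladd distrib_left sum.distrib sum_distrib_left algebra_simps)
    finally show ?thesis by (simp add: algebra_simps)
  qed
  have Qrec: "Qs (Suc t) = \<mu> * Qs t - z * (\<Sum>j\<in>UNIV. r$j * cdot h0 (cv (E t j))) + \<delta> t" for t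
  proof -
    have e: "cdot q (cv (E (Suc t) j)) = \<mu> * cdot q (cv (E t j)) - z * cdot h0 (cv (E t j)) + cdot q (cv (d t j))" for j
    proof -
      have "E (Suc t) j = F *v E t j + d t j" by (simp add: d_def)
      then have "cdot q (cv (E (Suc t) j)) = cdot (q v* cmat F) (cv (E t j)) + cdot q (cv (d t j))"
        by (simp only: cv_add cdot_add cv_mv cdot_mv)
      then show ?thesis unfolding qF by (simp add: cdot_ldiff)
    qed
    show ?thesis unfolding Qs_def \<delta>_def e
      by (simp add: algebra_simps sum.distrib sum_subtractf sum_distrib_left)
  qed
  have rec: "\<zeta> (Suc t) = \<mu> * \<zeta> t + \<delta> t" for t
    unfolding \<zeta>_def Prec Qrec by (simp add: algebra_simps)
  have D: "(\<Sum>s<t. cmod (\<delta> s)) \<le> CARD('N) * (CARD('n) * ((cG + cB) / (1 - \<rho>)))" for t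
  proof -
    have dl: "cmod (\<delta> s) \<le> CARD('N) * (CARD('n) * \<beta> s)" for s
    proof -
      have "cmod (\<delta> s) \<le> (\<Sum>j\<in>UNIV. cmod (r$j * cdot q (cv (d s j))))"
        unfolding \<delta>_def by (rule norm_sum)
      also have "\<dots> \<le> (\<Sum>j\<in>(UNIV::'N set). CARD('n) * \<beta> s)"
      proof (rule sum_mono)
        fix j
        have "cmod (cdot q (cv (d s j))) \<le> CARD('n) * \<beta> s"
          by (rule cdot_bound) (use q db in auto)
        then have "cmod (r$j) * cmod (cdot q (cv (d s j))) \<le> 1 * (CARD('n) * \<beta> s)"
          using r(3) by (intro mult_mono) auto
        then show "cmod (r$j * cdot q (cv (d s j))) \<le> CARD('n) * \<beta> s" by (simp add: norm_mult)
      qed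
      finally show ?thesis by simp
    qed
    have "(\<Sum>s<t. cmod (\<delta> s)) \<le> (\<Sum>s<t. CARD('N) * (CARD('n) * \<beta> s))"
      by (intro sum_mono dl)
    also have "\<dots> = CARD('N) * (CARD('n) * (\<Sum>s<t. \<beta> s))" by (simp add: sum_distrib_left)
    also have "\<dots> \<le> CARD('N) * (CARD('n) * ((cG + cB) / (1 - \<rho>)))"
      unfolding \<beta>_def using beta_sum_le[OF gpos rho cG0 cB0] by (intro mult_left_mono) auto
    finally show ?thesis .
  qed
  obtain j1 :: 'N where True by simp
  have zeq: "\<zeta> t = (\<Sum>j\<in>UNIV. r$j * (cdot y (cv (X t j - X t j1)) + cdot q (cv (E t j))))" for t
  proof -
    have "(\<Sum>j\<in>UNIV. r$j * cdot y (cv (X t j1))) = 0"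
      using r(2) by (simp add: sum_distrib_right[symmetric])
    then show ?thesis unfolding \<zeta>_def P_def Qs_def
      by (simp add: algebra_simps sum.distrib sum_subtractf)
  qed
  have "\<zeta> \<longlonglongrightarrow> 0"
    unfolding zeq
    by (intro tendsto_null_sum tendsto_mult_right_zero tendsto_add_zero cdot_tendsto)
      (use Econv cons in auto)
  from growth[OF rec mu D this] show ?thesis unfolding \<zeta>_def P_def Qs_def cG_def cB_def
    by (simp add: distrib_left sum.distrib)
qed

end

lemma infnorm_le_cart:
  fixes v :: "real^'k"
  assumes "\<forall>i. \<bar>v$i\<bar> \<le> c" shows "infnorm v \<le> c"
  unfolding infnorm_cart using assms by (intro cSup_least) auto

lemma stack_lt:
  assumes "\<forall>j. infnorm (X j) \<le> c" "c < C" shows "stack_infnorm X < C"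
  unfolding stack_infnorm_def using assms by (subst Max_less_iff) (auto intro: le_less_trans)

lemma ctrl_zero: "ctrl K a (\<lambda>j. 0) i = 0"
  by (simp add: ctrl_def)

lemma ctrl_bound:
  fixes a :: "real^'N::finite^'N" and K :: "real^'n^'m"
  assumes nn: "\<forall>i j. a$i$j \<ge> 0" and xh: "\<forall>j l. \<bar>xh j $ l\<bar> \<le> s"
  shows "\<bar>ctrl K a xh i $ l\<bar> \<le> onorm ((*v) K) * (sqrt CARD('n) * (2 * s * (\<Sum>i\<in>UNIV. \<Sum>j\<in>UNIV. a$i$j)))"
  unfolding ctrl_def
proof (rule comp_bound, rule infnorm_le_cart, rule allI)
  fix l'
  have "\<bar>(\<Sum>j\<in>{j. a$i$j > 0}. a$i$j *\<^sub>R (xh j - xh i)) $ l'\<bar>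
      \<le> (\<Sum>j\<in>{j. a$i$j > 0}. \<bar>a$i$j * (xh j $ l' - xh i $ l')\<bar>)"
    by (simp add: sum_component sum_abs)
  also have "\<dots> \<le> (\<Sum>j\<in>{j. a$i$j > 0}. a$i$j * (2 * s))"
  proof (rule sum_mono)
    fix j
    have "\<bar>xh j $ l' - xh i $ l'\<bar> \<le> 2 * s" using xh[rule_format, of j l'] xh[rule_format, of i l'] by linarith
    then show "\<bar>a$i$j * (xh j $ l' - xh i $ l')\<bar> \<le> a$i$j * (2 * s)"
      using nn by (simp add: abs_mult mult_left_mono)
  qed
  also have "\<dots> \<le> (\<Sum>j\<in>UNIV. a$i$j * (2 * s))"
    using nn xh[rule_format, of i l'] by (intro sum_mono2) auto
  also have "\<dots> = 2 * s * (\<Sum>j\<in>UNIV. a$i$j)" by (simp add: sum_distrib_left mult.commute)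
  also have "\<dots> \<le> 2 * s * (\<Sum>i\<in>UNIV. \<Sum>j\<in>UNIV. a$i$j)"
  proof (rule mult_left_mono)
    show "(\<Sum>j\<in>UNIV. a$i$j) \<le> (\<Sum>i\<in>UNIV. \<Sum>j\<in>UNIV. a$i$j)"
      using nn by (intro member_le_sum) (auto intro: sum_nonneg)
    show "0 \<le> 2 * s" using xh[rule_format, of i l'] by linarith
  qed
  finally show "\<bar>(\<Sum>j\<in>{j. a$i$j > 0}. a$i$j *\<^sub>R (xh j - xh i)) $ l'\<bar> \<le> 2 * s * (\<Sum>i\<in>UNIV. \<Sum>j\<in>UNIV. a$i$j)" .
qed

lemma axis_comp: "0 \<le> s \<Longrightarrow> \<bar>(s *\<^sub>R axis k (1::real)) $ l\<bar> \<le> s"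
  by (simp add: axis_def)

lemma cdot_axis: "cdot y (cv (s *\<^sub>R axis k (1::real))) = complex_of_real s * y$k"
  by (simp add: cdot_def cv_def axis_def if_distrib cong: if_cong)

lemma cdot_axis1[simp]: "cdot y (cv (axis k (1::real))) = y$k"
  using cdot_axis[of y 1 k] by simp

theorem theorem3:
  fixes A :: "real^'n^'n" and B :: "real^'m^'n" and C :: "real^'n^'p"
    and a :: "real^'N::finite^'N"
    and LG LK \<rho> :: real
  assumes adj_diag: "\<forall>i. a$i$i = 0"
    and adj_nonneg: "\<forall>i j. a$i$j \<ge> 0"
    and LG_pos: "LG > 0" and LK_pos: "LK > 0"
    and rho: "0 < \<rho>" "\<rho> < 1"
    and hyp: "\<exists>W>0. \<exists>Wu>0. \<forall>Cx>0. \<forall>Cxh>0. \<forall>Cuh>0.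
      \<exists>(\<gamma>::real) (\<alpha>::real) (\<alpha>u::real) (L::nat) (Lu::nat) (G::real^'p^'n) (K::real^'n^'m).
        0 < \<gamma> \<and> \<gamma> < \<rho> \<and> 0 < \<alpha> \<and> \<alpha> \<le> 1 \<and> 0 < \<alpha>u \<and> \<alpha>u \<le> 1 \<and> 0 < L \<and> 0 < Lu \<and>
        onorm (\<lambda>v. G *v v) < LG \<and> onorm (\<lambda>v. K *v v) < LK \<and>
        (\<forall>(x0::'N \<Rightarrow> real^'n) (xh0::'N \<Rightarrow> real^'n) (uh0::'N \<Rightarrow> real^'m).
           stack_infnorm x0 < Cx \<and> stack_infnorm xh0 < Cxh \<and> stack_infnorm uh0 < Cuh \<longrightarrow>
           (\<forall>j. (\<lambda>t. fst (cl A B C a \<gamma> \<alpha> \<alpha>u L Lu G K x0 xh0 uh0 t) j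
                     - fst (snd (cl A B C a \<gamma> \<alpha> \<alpha>u L Lu G K x0 xh0 uh0 t)) j) \<longlonglongrightarrow> 0) \<and>
           (\<forall>i j. (\<lambda>t. fst (cl A B C a \<gamma> \<alpha> \<alpha>u L Lu G K x0 xh0 uh0 t) i
                     - fst (cl A B C a \<gamma> \<alpha> \<alpha>u L Lu G K x0 xh0 uh0 t) j) \<longlonglongrightarrow> 0) \<and>
           (\<forall>t j. infnorm (qerr A B C a \<gamma> \<alpha> \<alpha>u L Lu G K x0 xh0 uh0 t j) \<le> W) \<and>
           (\<forall>t j. infnorm (qerr_u A B C a \<gamma> \<alpha> \<alpha>u L Lu G K x0 xh0 uh0 t j) \<le> Wu))"
  shows "(\<exists>K :: real^'n^'m. \<forall>z\<in>lap_eigs_rest a.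
            schur_stable (cmat A - mat z ** cmat B ** cmat K))
         \<and> detectable A C"
proof -
  obtain W Wu where W: "W > 0" "Wu > 0" and H0: "\<forall>Cx>0. \<forall>Cxh>0. \<forall>Cuh>0.
      \<exists>(\<gamma>::real) (\<alpha>::real) (\<alpha>u::real) (L::nat) (Lu::nat) (G::real^'p^'n) (K::real^'n^'m).
        0 < \<gamma> \<and> \<gamma> < \<rho> \<and> 0 < \<alpha> \<and> \<alpha> \<le> 1 \<and> 0 < \<alpha>u \<and> \<alpha>u \<le> 1 \<and> 0 < L \<and> 0 < Lu \<and>
        onorm (\<lambda>v. G *v v) < LG \<and> onorm (\<lambda>v. K *v v) < LK \<and>
        (\<forall>(x0::'N \<Rightarrow> real^'n) (xh0::'N \<Rightarrow> real^'n) (uh0::'N \<Rightarrow> real^'m).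
           stack_infnorm x0 < Cx \<and> stack_infnorm xh0 < Cxh \<and> stack_infnorm uh0 < Cuh \<longrightarrow>
           (\<forall>j. (\<lambda>t. fst (cl A B C a \<gamma> \<alpha> \<alpha>u L Lu G K x0 xh0 uh0 t) j
                     - fst (snd (cl A B C a \<gamma> \<alpha> \<alpha>u L Lu G K x0 xh0 uh0 t)) j) \<longlonglongrightarrow> 0) \<and>
           (\<forall>i j. (\<lambda>t. fst (cl A B C a \<gamma> \<alpha> \<alpha>u L Lu G K x0 xh0 uh0 t) i
                     - fst (cl A B C a \<gamma> \<alpha> \<alpha>u L Lu G K x0 xh0 uh0 t) j) \<longlonglongrightarrow> 0) \<and>
           (\<forall>t j. infnorm (qerr A B C a \<gamma> \<alpha> \<alpha>u L Lu G K x0 xh0 uh0 t j) \<le> W) \<and>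
           (\<forall>t j. infnorm (qerr_u A B C a \<gamma> \<alpha> \<alpha>u L Lu G K x0 xh0 uh0 t j) \<le> Wu))"
    using hyp by (elim exE conjE) (rule that, assumption+)
  define cG where "cG = LG * (sqrt CARD('p) * W)"
  define cB where "cB = onorm ((*v) B) * (sqrt CARD('m) * Wu)"
  define Bnd where "Bnd = CARD('N) * (CARD('n) * ((cG + cB) / (1 - \<rho>)))"
  define s where "s = Bnd + 1"
  define Amax where "Amax = (\<Sum>i\<in>UNIV. \<Sum>j\<in>UNIV. a$i$j)"
  define Cu where "Cu = LK * (sqrt CARD('n) * (2 * s * Amax)) + 1"
  have cG0: "0 \<le> cG" unfolding cG_def using W LG_pos by simp
  have cB0: "0 \<le> cB" unfolding cB_def using W onorm_pos_le[OF matrix_vector_mul_bounded_linear, of B] by simp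
  have Bnd0: "0 \<le> Bnd" unfolding Bnd_def using cG0 cB0 rho by simp
  have s0: "0 < s" unfolding s_def using Bnd0 by simp
  have Amax0: "0 \<le> Amax" unfolding Amax_def using adj_nonneg by (intro sum_nonneg) auto
  have Cu0: "0 < Cu" unfolding Cu_def using LK_pos s0 Amax0 by (intro add_nonneg_pos) (auto intro!: mult_nonneg_nonneg)
  obtain \<gamma> \<alpha> \<alpha>u L Lu G K where g: "0 < \<gamma>" "\<gamma> < \<rho>"
    and GLG: "onorm ((*v) G) < LG" and KLK: "onorm ((*v) K) < LK"
    and H: "\<And>x0 xh0 uh0. stack_infnorm x0 < s + 1 \<Longrightarrow> stack_infnorm xh0 < s + 1 \<Longrightarrow> stack_infnorm uh0 < Cu \<Longrightarrow>
           (\<forall>j. (\<lambda>t. net.E A B C a \<gamma> \<alpha> \<alpha>u L Lu G K x0 xh0 uh0 t j) \<longlonglongrightarrow> 0) \<and>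
           (\<forall>i j. (\<lambda>t. net.X A B C a \<gamma> \<alpha> \<alpha>u L Lu G K x0 xh0 uh0 t i
                     - net.X A B C a \<gamma> \<alpha> \<alpha>u L Lu G K x0 xh0 uh0 t j) \<longlonglongrightarrow> 0) \<and>
           (\<forall>t j. infnorm (net.Q A B C a \<gamma> \<alpha> \<alpha>u L Lu G K x0 xh0 uh0 t j) \<le> W) \<and>
           (\<forall>t j. infnorm (net.QU A B C a \<gamma> \<alpha> \<alpha>u L Lu G K x0 xh0 uh0 t j) \<le> Wu)"
  proof -
    have "s + 1 > 0" using s0 by simp
    from H0[rule_format, OF this this Cu0] show ?thesis
    proof (elim exE, goal_cases)
      case (1 \<gamma> \<alpha> \<alpha>u L Lu G K)
    from 1 have P1: "0 < \<gamma>" "\<gamma> < \<rho>" "onorm (\<lambda>v. G *v v) < LG" "onorm (\<lambda>v. K *v v) < LK"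
      by simp_all
    from 1 have P2: "\<forall>(x0::'N \<Rightarrow> real^'n) (xh0::'N \<Rightarrow> real^'n) (uh0::'N \<Rightarrow> real^'m).
           stack_infnorm x0 < s + 1 \<and> stack_infnorm xh0 < s + 1 \<and> stack_infnorm uh0 < Cu \<longrightarrow>
           (\<forall>j. (\<lambda>t. fst (cl A B C a \<gamma> \<alpha> \<alpha>u L Lu G K x0 xh0 uh0 t) j
                     - fst (snd (cl A B C a \<gamma> \<alpha> \<alpha>u L Lu G K x0 xh0 uh0 t)) j) \<longlonglongrightarrow> 0) \<and>
           (\<forall>i j. (\<lambda>t. fst (cl A B C a \<gamma> \<alpha> \<alpha>u L Lu G K x0 xh0 uh0 t) i
                     - fst (cl A B C a \<gamma> \<alpha> \<alpha>u L Lu G K x0 xh0 uh0 t) j) \<longlonglongrightarrow> 0) \<and>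
           (\<forall>t j. infnorm (qerr A B C a \<gamma> \<alpha> \<alpha>u L Lu G K x0 xh0 uh0 t j) \<le> W) \<and>
           (\<forall>t j. infnorm (qerr_u A B C a \<gamma> \<alpha> \<alpha>u L Lu G K x0 xh0 uh0 t j) \<le> Wu)"
      by (elim conjE) assumption
    show ?thesis
    proof (rule that[of \<gamma> G K \<alpha> \<alpha>u L Lu])
      show "0 < \<gamma>" "\<gamma> < \<rho>" "onorm ((*v) G) < LG" "onorm ((*v) K) < LK" using P1 by simp_all
      fix x0 xh0 :: "'N \<Rightarrow> real^'n" and uh0 :: "'N \<Rightarrow> real^'m"
      assume "stack_infnorm x0 < s + 1" "stack_infnorm xh0 < s + 1" "stack_infnorm uh0 < Cu"
      with P2 have "(\<forall>j. (\<lambda>t. fst (cl A B C a \<gamma> \<alpha> \<alpha>u L Lu G K x0 xh0 uh0 t) j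
                     - fst (snd (cl A B C a \<gamma> \<alpha> \<alpha>u L Lu G K x0 xh0 uh0 t)) j) \<longlonglongrightarrow> 0) \<and>
           (\<forall>i j. (\<lambda>t. fst (cl A B C a \<gamma> \<alpha> \<alpha>u L Lu G K x0 xh0 uh0 t) i
                     - fst (cl A B C a \<gamma> \<alpha> \<alpha>u L Lu G K x0 xh0 uh0 t) j) \<longlonglongrightarrow> 0) \<and>
           (\<forall>t j. infnorm (qerr A B C a \<gamma> \<alpha> \<alpha>u L Lu G K x0 xh0 uh0 t j) \<le> W) \<and>
           (\<forall>t j. infnorm (qerr_u A B C a \<gamma> \<alpha> \<alpha>u L Lu G K x0 xh0 uh0 t j) \<le> Wu)"
        by blast
      then show "(\<forall>j. (\<lambda>t. net.E A B C a \<gamma> \<alpha> \<alpha>u L Lu G K x0 xh0 uh0 t j) \<longlonglongrightarrow> 0) \<and>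
           (\<forall>i j. (\<lambda>t. net.X A B C a \<gamma> \<alpha> \<alpha>u L Lu G K x0 xh0 uh0 t i
                     - net.X A B C a \<gamma> \<alpha> \<alpha>u L Lu G K x0 xh0 uh0 t j) \<longlonglongrightarrow> 0) \<and>
           (\<forall>t j. infnorm (net.Q A B C a \<gamma> \<alpha> \<alpha>u L Lu G K x0 xh0 uh0 t j) \<le> W) \<and>
           (\<forall>t j. infnorm (net.QU A B C a \<gamma> \<alpha> \<alpha>u L Lu G K x0 xh0 uh0 t j) \<le> Wu)"
        using P1(1) by (simp only: net_def net.E_def net.X_def net.XH_def net.Q_def net.QU_def simp_thms)
    qed
    qed
  qed
  have net: "net \<gamma>" by unfold_locales (rule g(1))
  have LGle: "onorm ((*v) G) \<le> LG" using GLG by simp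
  have s_bnd: "\<bar>(s *\<^sub>R axis k (1::real)) $ l\<bar> \<le> s" for k l using s0 by (intro axis_comp) simp
  have inf_s: "infnorm (s *\<^sub>R axis k (1::real)) \<le> s" for k :: 'n
    using s_bnd by (intro infnorm_le_cart) auto
  have zero_lt: "stack_infnorm (\<lambda>j::'N. 0::real^'k) < c" if "0 < c" for c
    using that by (intro stack_lt[of _ 0]) (auto simp: infnorm_0)
  have ctrl_lt: "stack_infnorm (\<lambda>j. ctrl K a xh j) < Cu" if "\<forall>j l. \<bar>xh j $ l\<bar> \<le> s" for xh
  proof (rule stack_lt)
    show "\<forall>j. infnorm (ctrl K a xh j) \<le> LK * (sqrt CARD('n) * (2 * s * Amax))"
    proof (intro allI infnorm_le_cart)
      fix j l
      have "\<bar>ctrl K a xh j $ l\<bar> \<le> onorm ((*v) K) * (sqrt CARD('n) * (2 * s * Amax))"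
        unfolding Amax_def using ctrl_bound[OF adj_nonneg that] .
      also have "\<dots> \<le> LK * (sqrt CARD('n) * (2 * s * Amax))"
        using KLK s0 Amax0 by (intro mult_right_mono) auto
      finally show "\<bar>ctrl K a xh j $ l\<bar> \<le> LK * (sqrt CARD('n) * (2 * s * Amax))" .
    qed
    show "LK * (sqrt CARD('n) * (2 * s * Amax)) < Cu" unfolding Cu_def by simp
  qed

  have Bnd_ge: "CARD('n) * ((cG + cB) / (1 - \<rho>)) \<le> Bnd"
  proof -
    have "0 \<le> CARD('n) * ((cG + cB) / (1 - \<rho>))" using cG0 cB0 rho by simp
    moreover have "(1::real) \<le> CARD('N)" by simp
    ultimately show ?thesis unfolding Bnd_def using mult_right_mono[of 1 "real CARD('N)" "CARD('n) * ((cG + cB) / (1 - \<rho>))"] by simp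
  qed
  have norm_le1: "cmod (v$i / c) \<le> 1" if "cmod (v$i) \<le> cmod c" "c \<noteq> 0" for v :: "complex^'q" and i c
    using that by (simp add: norm_divide divide_le_eq_1)
  have Fstab: "schur_stable (cmat (A - G ** C))"
    unfolding schur_stable_def
  proof (intro allI impI, rule ccontr)
    fix \<mu> assume root: "poly (charpoly (cmat (A - G ** C))) \<mu> = 0" and nlt: "\<not> cmod \<mu> < 1"
    then have mu: "1 \<le> cmod \<mu>" by simp
    obtain y where y: "y \<noteq> 0" "y v* cmat (A - G ** C) = \<mu> *s y"
      using eig_left root poly_charpoly by metis
    obtain k where k: "y$k \<noteq> 0" "\<forall>i. cmod (y$i) \<le> cmod (y$k)" using normalize_vec[OF y(1)] by blast
    define y' where "y' = (1 / y$k) *s y"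
    have y'1: "y' v* cmat (A - G ** C) = \<mu> *s y'"
      using y(2) by (simp add: y'_def scalar_vector_matrix_assoc vector_smult_assoc mult.commute)
    have y'2: "\<forall>i. cmod (y'$i) \<le> 1" using k by (simp add: y'_def norm_divide divide_le_eq_1)
    have y'k: "y'$k = 1" using k by (simp add: y'_def)
    define x0 :: "'N \<Rightarrow> real^'n" where "x0 = (\<lambda>j. s *\<^sub>R axis k 1)"
    define xh0 :: "'N \<Rightarrow> real^'n" where "xh0 = (\<lambda>j. 0)"
    define uh0 :: "'N \<Rightarrow> real^'m" where "uh0 = (\<lambda>j. 0)"
    have b1: "stack_infnorm x0 < s + 1" unfolding x0_def by (rule stack_lt[of _ s]) (use inf_s in auto)
    have b2: "stack_infnorm xh0 < s + 1" unfolding xh0_def using s0 by (intro zero_lt) simp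
    have b3: "stack_infnorm uh0 < Cu" unfolding uh0_def using Cu0 by (intro zero_lt)
    note HH = H[OF b1 b2 b3]
    interpret N: net A B C a \<gamma> \<alpha> \<alpha>u L Lu G K x0 xh0 uh0 by unfold_locales (rule g(1))
    obtain j0 :: 'N where True by simp
    have init: "\<forall>j. N.UH 0 j = ctrl K a (N.XH 0) j"
      unfolding N.UH0 N.XH0 by (simp add: uh0_def xh0_def ctrl_zero)
    have "cmod (cdot y' (cv (N.E 0 j0))) \<le> CARD('n) * ((LG * (sqrt CARD('p) * W) + onorm ((*v) B) * (sqrt CARD('m) * Wu)) / (1 - \<rho>))"
      by (rule N.A2_core[OF _ _ init LGle g(2) rho(2) _ y'1 y'2 mu]) (use HH in auto)
    moreover have "cdot y' (cv (N.E 0 j0)) = complex_of_real s"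
      unfolding N.E_def N.X0 N.XH0 by (simp add: x0_def xh0_def cdot_axis y'k)
    ultimately have "s \<le> CARD('n) * ((cG + cB) / (1 - \<rho>))" using s0 by (simp add: cG_def cB_def)
    with Bnd_ge show False unfolding s_def by simp
  qed
  have A1: "\<forall>z\<in>lap_eigs_rest a. schur_stable (cmat A - mat z ** cmat B ** cmat K)"
  proof
    fix z assume zin: "z \<in> lap_eigs_rest a"
    obtain r where r: "r \<noteq> 0" "r v* cmat (laplacian a) = z *s r" "(\<Sum>i\<in>UNIV. r$i) = 0"
      using lap_left[OF zin] by blast
    obtain j0 where j0: "r$j0 \<noteq> 0" "\<forall>i. cmod (r$i) \<le> cmod (r$j0)" using normalize_vec[OF r(1)] by blast
    define r' where "r' = (1 / r$j0) *s r"
    have r'1: "r' v* cmat (laplacian a) = z *s r'"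
      using r(2) by (simp add: r'_def scalar_vector_matrix_assoc vector_smult_assoc mult.commute)
    have r'2: "(\<Sum>i\<in>UNIV. r'$i) = 0" using r(3) by (simp add: r'_def sum_divide_distrib[symmetric])
    have r'3: "\<forall>j. cmod (r'$j) \<le> 1" using j0 by (simp add: r'_def norm_divide divide_le_eq_1)
    have r'j0: "r'$j0 = 1" using j0 by (simp add: r'_def)
    show "schur_stable (cmat A - mat z ** cmat B ** cmat K)"
      unfolding schur_stable_def
    proof (intro allI impI, rule ccontr)
      fix \<mu> assume root: "poly (charpoly (cmat A - mat z ** cmat B ** cmat K)) \<mu> = 0" and nlt: "\<not> cmod \<mu> < 1"
      then have mu: "1 \<le> cmod \<mu>" by simp
      obtain y where y: "y \<noteq> 0" "y v* (cmat A - mat z ** cmat B ** cmat K) = \<mu> *s y"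
        using eig_left root poly_charpoly by metis
      have detF: "det (mat \<mu> - cmat (A - G ** C)) \<noteq> 0"
      proof
        assume "det (mat \<mu> - cmat (A - G ** C)) = 0"
        with Fstab have "cmod \<mu> < 1" unfolding schur_stable_def poly_charpoly by blast
        with mu show False by simp
      qed
      obtain R where R: "R ** (mat \<mu> - cmat (A - G ** C)) = mat 1" using left_inv[OF detF] by blast
      define q where "q = (z *s (y v* (cmat B ** cmat K))) v* R"
      have q1: "q v* (mat \<mu> - cmat (A - G ** C)) = z *s (y v* (cmat B ** cmat K))"
        unfolding q_def vector_matrix_mul_assoc R by simp
      obtain c k where c: "c \<noteq> 0" and qb: "\<forall>i. cmod (q$i) \<le> cmod c"
        and ck: "(q \<noteq> 0 \<and> c = q$k) \<or> (q = 0 \<and> c = y$k)"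
      proof (cases "q = 0")
        case True
        obtain k where "y$k \<noteq> 0" "\<forall>i. cmod (y$i) \<le> cmod (y$k)" using normalize_vec[OF y(1)] by blast
        then show ?thesis using True by (intro that[of "y$k" k]) auto
      next
        case False
        obtain k where "q$k \<noteq> 0" "\<forall>i. cmod (q$i) \<le> cmod (q$k)" using normalize_vec[OF False] by blast
        then show ?thesis using False by (intro that[of "q$k" k]) auto
      qed
      define y' where "y' = (1 / c) *s y"
      define q' where "q' = (1 / c) *s q"
      have y'1: "y' v* (cmat A - mat z ** cmat B ** cmat K) = \<mu> *s y'"
        using y(2) by (simp add: y'_def scalar_vector_matrix_assoc vector_smult_assoc mult.commute)
      have q'1: "q' v* (mat \<mu> - cmat (A - G ** C)) = z *s (y' v* (cmat B ** cmat K))"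
        using q1 by (simp add: q'_def y'_def scalar_vector_matrix_assoc vector_smult_assoc mult.commute)
      have q'b: "\<forall>i. cmod (q'$i) \<le> 1"
        using qb c by (simp add: q'_def norm_divide divide_le_eq_1)
      have key: "cmod (\<Sum>j\<in>UNIV. r'$j * (cdot y' (cv (x0 j)) + cdot q' (cv (x0 j - xh0 j)))) \<le> Bnd"
        if x0b: "\<forall>j l. \<bar>x0 j $ l\<bar> \<le> s" and xh0b: "\<forall>j l. \<bar>xh0 j $ l\<bar> \<le> s"
        for x0 xh0 :: "'N \<Rightarrow> real^'n"
      proof -
        define uh0 where "uh0 = (\<lambda>j. ctrl K a xh0 j)"
        have b1: "stack_infnorm x0 < s + 1" using x0b by (intro stack_lt[of _ s]) (auto intro: infnorm_le_cart)
        have b2: "stack_infnorm xh0 < s + 1" using xh0b by (intro stack_lt[of _ s]) (auto intro: infnorm_le_cart)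
        have b3: "stack_infnorm uh0 < Cu" unfolding uh0_def by (rule ctrl_lt[OF xh0b])
        note HH = H[OF b1 b2 b3]
        interpret N: net A B C a \<gamma> \<alpha> \<alpha>u L Lu G K x0 xh0 uh0 by unfold_locales (rule g(1))
        have init: "\<forall>j. N.UH 0 j = ctrl K a (N.XH 0) j"
          unfolding N.UH0 N.XH0 by (simp add: uh0_def)
        have "cmod (\<Sum>j\<in>UNIV. r'$j * (cdot y' (cv (N.X 0 j)) + cdot q' (cv (N.E 0 j))))
            \<le> CARD('N) * (CARD('n) * ((LG * (sqrt CARD('p) * W) + onorm ((*v) B) * (sqrt CARD('m) * Wu)) / (1 - \<rho>)))"
          by (rule N.A1_core[OF _ _ init LGle g(2) rho(2) _ _ adj_nonneg r'1 r'2 r'3 y'1 q'1 q'b mu])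
            (use HH in auto)
        then show ?thesis by (simp add: N.E_def N.X0 N.XH0 Bnd_def cG_def cB_def)
      qed
      have sB: "\<not> s \<le> Bnd" unfolding s_def by simp
      show False
      proof (cases "q = 0")
        case False
        with ck have qk: "c = q$k" by simp
        have q'k: "q'$k = 1" using c qk by (simp add: q'_def)
        define xh0 :: "'N \<Rightarrow> real^'n" where "xh0 = (\<lambda>j. if j = j0 then - (s *\<^sub>R axis k 1) else 0)"
        have K1: "cmod (\<Sum>j\<in>UNIV. r'$j * (cdot y' (cv ((\<lambda>j. 0::real^'n) j)) + cdot q' (cv ((\<lambda>j. 0::real^'n) j - xh0 j)))) \<le> Bnd"
          by (rule key) (use s_bnd s0 in \<open>auto simp: xh0_def\<close>)
        have "r'$j * (cdot y' (cv ((\<lambda>j. 0::real^'n) j)) + cdot q' (cv ((\<lambda>j. 0::real^'n) j - xh0 j)))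
            = (if j = j0 then complex_of_real s else 0)" for j
          by (simp add: xh0_def cdot_axis q'k r'j0)
        then have "cmod (complex_of_real s) \<le> Bnd" using K1 by simp
        with sB s0 show False by simp
      next
        case True
        with ck have yk: "c = y$k" by simp
        have y'k: "y'$k = 1" using c yk by (simp add: y'_def)
        have q'0: "q' = 0" using True by (simp add: q'_def)
        define x0 :: "'N \<Rightarrow> real^'n" where "x0 = (\<lambda>j. if j = j0 then s *\<^sub>R axis k 1 else 0)"
        have K1: "cmod (\<Sum>j\<in>UNIV. r'$j * (cdot y' (cv (x0 j)) + cdot q' (cv (x0 j - x0 j)))) \<le> Bnd"
          by (rule key) (use s_bnd s0 in \<open>auto simp: x0_def\<close>)
        have "r'$j * (cdot y' (cv (x0 j)) + cdot q' (cv (x0 j - x0 j)))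
            = (if j = j0 then complex_of_real s else 0)" for j
          by (simp add: x0_def cdot_axis y'k r'j0)
        then have "cmod (complex_of_real s) \<le> Bnd" using K1 by simp
        with sB s0 show False by simp
      qed
    qed
  qed
  have det: "detectable A C" unfolding detectable_def by (rule exI[of _ G]) (rule Fstab)
  show ?thesis using A1 det by (intro conjI exI[of _ K]) assumption+
qed

end
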